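(* For $n\ge1$ let $Q_n$ be the number of domino tilings of $K_{1,3}\times P_{2n}$, and let $T_n$ be the number of domino tilings of $C_3\times P_{2n}$. For $n\ge0$ let $q_n$ be the number of domino tilings of the graph obtained from $K_{1,3}\times P_{2n+1}$ by deleting two leaf-vertices of the end copy $K_{1,3}\times\{1\}$. Let $t_n$ be the number of domino tilings of the graph obtained from $C_3\times P_{2n+1}$ by deleting one vertex of the end copy $C_3\times\{1\}$. Then $Q_n=T_n$ for all $n\ge1$ and $q_n=t_n$ for all $n\ge0$.
   Context: $H\times K$ denotes the Cartesian product of graphs. $P_m$ is the path with vertex set $\{1,\dots,m\}$. $C_3$ is the triangle and $K_{1,3}$ is the star with one center and three leaves. A domino tiling of a finite graph is a perfect matching, and the number of domino tilings is the number of perfect matchings. *)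

theory Defs
  imports Main
begin

text \<open>A finite simple graph is represented by a vertex set V and a set E of
  2-element subsets of V (undirected edges).\<close>

definition perfect_matching :: "'a set \<Rightarrow> 'a set set \<Rightarrow> 'a set set \<Rightarrow> bool" where
  "perfect_matching V E M \<longleftrightarrow> M \<subseteq> E \<and> (\<forall>v\<in>V. \<exists>!e. e \<in> M \<and> v \<in> e)"

text \<open>Number of domino tilings = number of perfect matchings.\<close>
definition num_tilings :: "'a set \<Rightarrow> 'a set set \<Rightarrow> nat" where
  "num_tilings V E = card {M. perfect_matching V E M}"

definition cart_verts :: "'a set \<Rightarrow> 'b set \<Rightarrow> ('a \<times> 'b) set" where
  "cart_verts V1 V2 = V1 \<times> V2"

definition cart_edges :: "'a set \<Rightarrow> 'a set set \<Rightarrow> 'b set \<Rightarrow> 'b set set \<Rightarrow> ('a \<times> 'b) set set" where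
  "cart_edges V1 E1 V2 E2 =
     {{(u, x), (v, x)} | u v x. {u, v} \<in> E1 \<and> x \<in> V2} \<union>
     {{(u, x), (u, y)} | u x y. u \<in> V1 \<and> {x, y} \<in> E2}"

definition del_edges :: "'a set set \<Rightarrow> 'a set \<Rightarrow> 'a set set" where
  "del_edges E S = {e \<in> E. e \<inter> S = {}}"

definition path_V :: "nat \<Rightarrow> nat set" where "path_V m = {1..m}"
definition path_E :: "nat \<Rightarrow> nat set set" where
  "path_E m = {{i, Suc i} | i. 1 \<le> i \<and> Suc i \<le> m}"

definition star_V :: "nat set" where "star_V = {0,1,2,3}"
definition star_E :: "nat set set" where "star_E = {{0,1},{0,2},{0,3}}"

definition tri_V :: "nat set" where "tri_V = {0,1,2}"
definition tri_E :: "nat set set" where "tri_E = {{0,1},{1,2},{0,2}}"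

definition Q :: "nat \<Rightarrow> nat" where
  "Q n = num_tilings (cart_verts star_V (path_V (2*n))) (cart_edges star_V star_E (path_V (2*n)) (path_E (2*n)))"

definition T :: "nat \<Rightarrow> nat" where
  "T n = num_tilings (cart_verts tri_V (path_V (2*n))) (cart_edges tri_V tri_E (path_V (2*n)) (path_E (2*n)))"

definition q :: "nat \<Rightarrow> nat \<Rightarrow> nat \<Rightarrow> nat" where
  "q a b n = (let m = 2*n+1; S = {(a,1),(b,1)} in
     num_tilings (cart_verts star_V (path_V m) - S)
                 (del_edges (cart_edges star_V star_E (path_V m) (path_E m)) S))"

definition t :: "nat \<Rightarrow> nat \<Rightarrow> nat" where
  "t v n = (let m = 2*n+1; S = {(v,1)} in
     num_tilings (cart_verts tri_V (path_V m) - S)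
                 (del_edges (cart_edges tri_V tri_E (path_V m) (path_E m)) S))"

end

theory Submission imports Defs begin

lemma cart_edges_iff:
 "e \<in> cart_edges W EH (path_V m) (path_E m) \<longleftrightarrow>
   (\<exists>u v i. e = {(u,i),(v,i)} \<and> {u,v} \<in> EH \<and> 1 \<le> i \<and> i \<le> m) \<or>
   (\<exists>u i. e = {(u,i),(u,Suc i)} \<and> u \<in> W \<and> 1 \<le> i \<and> Suc i \<le> m)"
  unfolding cart_edges_def path_V_def path_E_def
  apply (auto simp: doubleton_eq_iff)
  apply (metis insert_commute)+
  done

lemma cart_edge_layers:
  assumes "e \<in> cart_edges W EH (path_V m) (path_E m)"
  shows "e \<noteq> {}" "x \<in> e \<Longrightarrow> 1 \<le> snd x \<and> snd x \<le> m"
  using assms unfolding cart_edges_iff by auto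

lemma cart_mono: "e \<in> cart_edges W EH (path_V m) (path_E m) \<Longrightarrow> e \<in> cart_edges W EH (path_V (Suc m)) (path_E (Suc m))"
  unfolding cart_edges_iff
  apply (elim disjE exE conjE)
  apply (rule disjI1)
  apply (intro exI conjI, assumption+, simp)
  apply (rule disjI2)
  apply (intro exI conjI, assumption+, simp)
  done

definition PMs where "PMs V E = {M. perfect_matching V E M}"

definition Vm :: "'a set \<Rightarrow> ('a \<times> nat) set \<Rightarrow> nat \<Rightarrow> 'a set \<Rightarrow> ('a \<times> nat) set" where
  "Vm W D m A = {(u,i). u \<in> W \<and> 1 \<le> i \<and> i \<le> m \<and> (u,i) \<notin> D \<and> \<not> (i = m \<and> u \<in> A)}"

definition Em where "Em W EH D m A = {e \<in> cart_edges W EH (path_V m) (path_E m). e \<subseteq> Vm W D m A}"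

lemma mem_Vm[simp]: "(u,i) \<in> Vm W D m A \<longleftrightarrow> u \<in> W \<and> 1 \<le> i \<and> i \<le> m \<and> (u,i) \<notin> D \<and> \<not> (i = m \<and> u \<in> A)"
  by (simp add: Vm_def)

locale lay =
  fixes W :: "'a set" and EH :: "'a set set" and D :: "('a \<times> nat) set"
  assumes finW: "finite W"
    and EH: "\<And>e. e \<in> EH \<Longrightarrow> \<exists>u v. e = {u,v} \<and> u \<noteq> v \<and> u \<in> W \<and> v \<in> W"
begin

lemma Em_class:
  assumes "e \<in> Em W EH D (Suc m) A"
  shows "(\<exists>u v. e = {(u,Suc m),(v,Suc m)} \<and> {u,v} \<in> EH) \<or> (\<exists>u. e = {(u,m),(u,Suc m)})
     \<or> e \<in> cart_edges W EH (path_V m) (path_E m)"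
  using assms unfolding Em_def cart_edges_iff
  by (auto simp: le_Suc_eq)

lemma Em_cases[consumes 1, case_names top vert low]:
  assumes "e \<in> Em W EH D (Suc m) A"
  obtains (top) u v where "e = {(u,Suc m),(v,Suc m)}" "{u,v} \<in> EH"
    | (vert) u where "e = {(u,m),(u,Suc m)}"
    | (low) "e \<in> cart_edges W EH (path_V m) (path_E m)"
  using Em_class[OF assms] by blast

lemma main_decomp:
  fixes m :: nat and A :: "'a set"
  defines "lift \<equiv> \<lambda>N. (\<lambda>e. (\<lambda>u. (u, Suc m)) ` e) ` N"
    and "vert \<equiv> \<lambda>S. (\<lambda>u. {(u,m),(u,Suc m)}) ` S"
    and "VS \<equiv> {S. S \<subseteq> {u\<in>W. (u, Suc m) \<notin> D} - A \<and> S \<subseteq> {u. (u,m) \<in> Vm W D m {}}}"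
    and "PH \<equiv> \<lambda>S. PMs ({u\<in>W. (u, Suc m) \<notin> D} - A - S) {e\<in>EH. e \<subseteq> {u\<in>W. (u, Suc m) \<notin> D} - A - S}"
    and "PL \<equiv> \<lambda>S. PMs (Vm W D m S) (Em W EH D m S)"
  shows "PMs (Vm W D (Suc m) A) (Em W EH D (Suc m) A) =
     (\<Union>S\<in>VS. (\<lambda>(N,L). lift N \<union> vert S \<union> L) ` (PH S \<times> PL S))"
proof (rule set_eqI, rule iffI)
  fix M assume "M \<in> PMs (Vm W D (Suc m) A) (Em W EH D (Suc m) A)"
  then have ME: "M \<subseteq> Em W EH D (Suc m) A"
    and Mc: "\<And>v. v \<in> Vm W D (Suc m) A \<Longrightarrow> \<exists>!e. e \<in> M \<and> v \<in> e"
    unfolding PMs_def perfect_matching_def by auto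
  have MV: "e \<in> M \<Longrightarrow> \<forall>x\<in>e. x \<in> Vm W D (Suc m) A" for e
    using ME unfolding Em_def by auto
  have uniq: "e \<in> M \<Longrightarrow> e' \<in> M \<Longrightarrow> x \<in> e \<Longrightarrow> x \<in> e' \<Longrightarrow> e = e'" for e e' x
    using Mc MV by metis
  define S where "S = {u. {(u,m),(u,Suc m)} \<in> M}"
  define N where "N = {fst ` e | e. e \<in> M \<and> (\<forall>x\<in>e. snd x = Suc m)}"
  define L where "L = {e \<in> M. \<forall>x\<in>e. snd x \<le> m}"
  have S_VS: "S \<in> VS"
  proof -
    have "u \<in> {u\<in>W. (u, Suc m) \<notin> D} - A \<and> (u,m) \<in> Vm W D m {}" if "u \<in> S" for u
    proof -
      have e: "{(u,m),(u,Suc m)} \<in> M" using that S_def by auto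
      have "(u,Suc m) \<in> Vm W D (Suc m) A" "(u,m) \<in> Vm W D (Suc m) A"
        using MV[OF e] by auto
      then show ?thesis by auto
    qed
    then show ?thesis unfolding VS_def by auto
  qed
  have N_PH: "N \<in> PH S"
  proof -
    have NE: "fst ` e \<in> EH \<and> fst ` e \<subseteq> {u\<in>W. (u, Suc m) \<notin> D} - A - S" if "e \<in> M" "\<forall>x\<in>e. snd x = Suc m" for e
    proof -
      have "e \<in> Em W EH D (Suc m) A" using ME that by auto
      then consider (t) u v where "e = {(u,Suc m),(v,Suc m)}" "{u,v} \<in> EH"
        | (v) u where "e = {(u,m),(u,Suc m)}"
        | (l) "e \<in> cart_edges W EH (path_V m) (path_E m)"
        by (rule Em_cases)
      then show ?thesis
      proof cases
        case t
        have "fst ` e = {u,v}" using t by auto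
        moreover have "w \<notin> S" if "w \<in> {u,v}" for w
        proof
          assume "w \<in> S"
          then have "{(w,m),(w,Suc m)} \<in> M" using S_def by auto
          moreover have "(w, Suc m) \<in> e" using t that by auto
          ultimately have "e = {(w,m),(w,Suc m)}" using uniq \<open>e \<in> M\<close> by blast
          then show False using \<open>\<forall>x\<in>e. snd x = Suc m\<close> by auto
        qed
        moreover have "(w, Suc m) \<in> Vm W D (Suc m) A" if "w \<in> {u,v}" for w
          using MV[OF \<open>e \<in> M\<close>] t that by auto
        ultimately show ?thesis using t by auto
      next
        case v then show ?thesis using that by auto
      next
        case l then show ?thesis using that cart_edge_layers[OF l] by fastforce
      qed
    qed
    have cov: "\<exists>!e. e \<in> N \<and> u \<in> e" if "u \<in> {u\<in>W. (u, Suc m) \<notin> D} - A - S" for u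
    proof -
      have uV: "(u, Suc m) \<in> Vm W D (Suc m) A" using that by auto
      then obtain e where e: "e \<in> M" "(u, Suc m) \<in> e" using Mc by blast
      have "e \<in> Em W EH D (Suc m) A" using ME e by auto
      then consider (t) a b where "e = {(a,Suc m),(b,Suc m)}" "{a,b} \<in> EH"
        | (v) a where "e = {(a,m),(a,Suc m)}"
        | (l) "e \<in> cart_edges W EH (path_V m) (path_E m)"
        by (rule Em_cases)
      then have top: "\<forall>x\<in>e. snd x = Suc m"
      proof cases
        case v
        then have "a = u" using e by auto
        then have "u \<in> S" using v e S_def by auto
        then show ?thesis using that by auto
      next
        case l then show ?thesis using cart_edge_layers[OF l] e by fastforce
      qed auto
      show ?thesis
      proof (rule ex1I[where a="fst ` e"])
        have "fst ` e \<in> N" unfolding N_def using e top by blast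
        moreover have "u \<in> fst ` e" using e(2) by (metis fst_conv image_eqI)
        ultimately show "fst ` e \<in> N \<and> u \<in> fst ` e" by blast
      next
        fix e1 assume "e1 \<in> N \<and> u \<in> e1"
        then obtain e1' where e1': "e1 = fst ` e1'" "e1' \<in> M" "\<forall>x\<in>e1'. snd x = Suc m" "u \<in> fst ` e1'"
          unfolding N_def by auto
        then have "(u, Suc m) \<in> e1'" by (metis (no_types, lifting) imageE prod.collapse)
        then have "e1' = e" using uniq e e1' by blast
        then show "e1 = fst ` e" using e1' by simp
      qed
    qed
    have "N \<subseteq> {e\<in>EH. e \<subseteq> {u\<in>W. (u, Suc m) \<notin> D} - A - S}" using NE N_def by auto
    then show ?thesis using cov unfolding PH_def PMs_def perfect_matching_def by auto
  qed
  have L_PL: "L \<in> PL S"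
  proof -
    have LE: "e \<in> Em W EH D m S" if "e \<in> L" for e
    proof -
      have eM: "e \<in> M" and low: "\<forall>x\<in>e. snd x \<le> m" using that L_def by auto
      have "e \<in> Em W EH D (Suc m) A" using ME eM by auto
      then consider (t) a b where "e = {(a,Suc m),(b,Suc m)}" "{a,b} \<in> EH"
        | (v) a where "e = {(a,m),(a,Suc m)}"
        | (l) "e \<in> cart_edges W EH (path_V m) (path_E m)"
        by (rule Em_cases)
      then have ce: "e \<in> cart_edges W EH (path_V m) (path_E m)"
        using low by cases auto
      have "x \<in> Vm W D m S" if "x \<in> e" for x
      proof -
        obtain w i where x: "x = (w,i)" by fastforce
        have "(w,i) \<in> Vm W D (Suc m) A" using MV[OF eM] that x by auto
        moreover have "i \<le> m" using low that x by auto
        moreover have "\<not> (i = m \<and> w \<in> S)"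
        proof
          assume "i = m \<and> w \<in> S"
          then have "{(w,m),(w,Suc m)} \<in> M" "(w,m) \<in> e" using S_def that x by auto
          then have "e = {(w,m),(w,Suc m)}" using uniq eM by blast
          then show False using low by auto
        qed
        ultimately show ?thesis using x by auto
      qed
      then show ?thesis using ce unfolding Em_def by auto
    qed
    have cov: "\<exists>!e. e \<in> L \<and> v \<in> e" if "v \<in> Vm W D m S" for v
    proof -
      obtain w i where x: "v = (w,i)" by fastforce
      have vV: "v \<in> Vm W D (Suc m) A" using that x by auto
      then obtain e where e: "e \<in> M" "v \<in> e" using Mc by blast
      have "e \<in> Em W EH D (Suc m) A" using ME e by auto
      then consider (t) a b where "e = {(a,Suc m),(b,Suc m)}" "{a,b} \<in> EH"
        | (v) a where "e = {(a,m),(a,Suc m)}"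
        | (l) "e \<in> cart_edges W EH (path_V m) (path_E m)"
        by (rule Em_cases)
      then have low: "\<forall>x\<in>e. snd x \<le> m"
      proof cases
        case t then show ?thesis using e x that by auto
      next
        case v
        then have "w = a" "i = m" using e x that by auto
        then have "w \<in> S" using v e S_def by auto
        then show ?thesis using that x \<open>i = m\<close> by auto
      next
        case l then show ?thesis using cart_edge_layers[OF l] by auto
      qed
      show ?thesis
      proof (rule ex1I[where a=e])
        show "e \<in> L \<and> v \<in> e" using e low L_def by auto
      next
        fix e1 assume "e1 \<in> L \<and> v \<in> e1"
        then show "e1 = e" using uniq e L_def by blast
      qed
    qed
    show ?thesis using LE cov unfolding PL_def PMs_def perfect_matching_def by auto
  qed
  have Meq: "M = lift N \<union> vert S \<union> L"
  proof (rule set_eqI, rule iffI)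
    fix e assume eM: "e \<in> M"
    have "e \<in> Em W EH D (Suc m) A" using ME eM by auto
    then consider (t) a b where "e = {(a,Suc m),(b,Suc m)}" "{a,b} \<in> EH"
      | (v) a where "e = {(a,m),(a,Suc m)}"
      | (l) "e \<in> cart_edges W EH (path_V m) (path_E m)"
      by (rule Em_cases)
    then show "e \<in> lift N \<union> vert S \<union> L"
    proof cases
      case t
      then have "fst ` e = {a,b}" by auto
      moreover have "\<forall>x\<in>e. snd x = Suc m" using t by auto
      then have "fst ` e \<in> N" unfolding N_def using eM by blast
      ultimately have "{a,b} \<in> N" by simp
      moreover have "e = (\<lambda>u. (u, Suc m)) ` {a,b}" using t by auto
      ultimately show ?thesis unfolding lift_def by blast
    next
      case v then show ?thesis using eM S_def vert_def by auto
    next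
      case l then show ?thesis using eM L_def cart_edge_layers[OF l] by auto
    qed
  next
    fix e assume "e \<in> lift N \<union> vert S \<union> L"
    then consider (t) "e \<in> lift N" | (v) "e \<in> vert S" | (l) "e \<in> L" by blast
    then show "e \<in> M"
    proof cases
      case t
      then obtain e' where "e' \<in> M" "\<forall>x\<in>e'. snd x = Suc m" "e = (\<lambda>u. (u, Suc m)) ` (fst ` e')"
        unfolding lift_def N_def by auto
      moreover have "(\<lambda>u. (u, Suc m)) ` (fst ` e') = e'" using calculation(2)
        by (force simp: image_image)
      ultimately show ?thesis by simp
    next
      case v then show ?thesis using S_def vert_def by auto
    next
      case l then show ?thesis using L_def by auto
    qed
  qed
  show "M \<in> (\<Union>S\<in>VS. (\<lambda>(N,L). lift N \<union> vert S \<union> L) ` (PH S \<times> PL S))"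
    using S_VS N_PH L_PL Meq by blast
next
  fix M assume "M \<in> (\<Union>S\<in>VS. (\<lambda>(N,L). lift N \<union> vert S \<union> L) ` (PH S \<times> PL S))"
  then obtain S N L where S: "S \<in> VS" and N: "N \<in> PH S" and L: "L \<in> PL S"
    and M: "M = lift N \<union> vert S \<union> L" by auto
  have S1: "S \<subseteq> {u\<in>W. (u, Suc m) \<notin> D} - A" "\<And>u. u \<in> S \<Longrightarrow> (u,m) \<in> Vm W D m {}" using S VS_def by auto
  have NE: "N \<subseteq> EH" "\<And>e. e \<in> N \<Longrightarrow> e \<subseteq> {u\<in>W. (u, Suc m) \<notin> D} - A - S"
    and Nc: "\<And>u. u \<in> {u\<in>W. (u, Suc m) \<notin> D} - A - S \<Longrightarrow> \<exists>!e. e \<in> N \<and> u \<in> e"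
    using N unfolding PH_def PMs_def perfect_matching_def by auto
  have LE: "L \<subseteq> Em W EH D m S"
    and Lc: "\<And>v. v \<in> Vm W D m S \<Longrightarrow> \<exists>!e. e \<in> L \<and> v \<in> e"
    using L unfolding PL_def PMs_def perfect_matching_def by auto
  have F3: "snd x \<le> m \<and> x \<in> Vm W D m S" if "e \<in> L" "x \<in> e" for e x
  proof -
    have "x \<in> Vm W D m S" using LE that unfolding Em_def by auto
    moreover obtain w i where "x = (w,i)" by fastforce
    ultimately show ?thesis by auto
  qed
  have F1: "snd x = Suc m \<and> fst x \<in> {u\<in>W. (u, Suc m) \<notin> D} - A - S" if a1: "e \<in> lift N" and a2: "x \<in> e" for e x
  proof -
    obtain e0 where e0: "e0 \<in> N" "e = (\<lambda>u. (u, Suc m)) ` e0" using a1 unfolding lift_def by auto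
    then obtain u where "u \<in> e0" "x = (u, Suc m)" using a2 by auto
    then show ?thesis using NE(2)[OF e0(1)] by auto
  qed
  have F2: "\<exists>e0\<in>N. w \<in> e0 \<and> e = (\<lambda>u. (u, Suc m)) ` e0" if "e \<in> lift N" "(w, Suc m) \<in> e" for e w
    using that unfolding lift_def by auto
  have F4: "\<exists>u\<in>S. e = {(u,m),(u,Suc m)}" if "e \<in> vert S" for e
    using that unfolding vert_def by auto
  have sub: "M \<subseteq> Em W EH D (Suc m) A"
  proof
    fix e assume "e \<in> M"
    then consider (t) "e \<in> lift N" | (v) "e \<in> vert S" | (l) "e \<in> L" using M by blast
    then show "e \<in> Em W EH D (Suc m) A"
    proof cases
      case t
      then obtain e0 where e0: "e0 \<in> N" "e = (\<lambda>u. (u, Suc m)) ` e0" unfolding lift_def by auto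
      then obtain a b where ab: "e0 = {a,b}" "a \<in> W" "b \<in> W" using EH NE(1) by blast
      have "e0 \<subseteq> {u\<in>W. (u, Suc m) \<notin> D} - A - S" using NE(2) e0 by auto
      then have "e \<subseteq> Vm W D (Suc m) A" using e0 by auto
      moreover have "e \<in> cart_edges W EH (path_V (Suc m)) (path_E (Suc m))"
        unfolding cart_edges_iff using e0 ab NE(1) by auto
      ultimately show ?thesis unfolding Em_def by auto
    next
      case v
      then obtain u where u: "u \<in> S" "e = {(u,m),(u,Suc m)}" using F4 by blast
      have "(u,m) \<in> Vm W D m {}" "u \<in> {u\<in>W. (u, Suc m) \<notin> D} - A" using S1 u by auto
      then have "e \<subseteq> Vm W D (Suc m) A" "e \<in> cart_edges W EH (path_V (Suc m)) (path_E (Suc m))"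
        using u unfolding cart_edges_iff by auto
      then show ?thesis unfolding Em_def by auto
    next
      case l
      then have "e \<in> Em W EH D m S" using LE by auto
      then have "e \<in> cart_edges W EH (path_V (Suc m)) (path_E (Suc m))"
        unfolding Em_def using cart_mono by blast
      moreover have "e \<subseteq> Vm W D (Suc m) A"
      proof
        fix x assume "x \<in> e"
        then have "x \<in> Vm W D m S" using F3 l by blast
        moreover obtain w i where "x = (w,i)" by fastforce
        ultimately show "x \<in> Vm W D (Suc m) A" by auto
      qed
      ultimately show ?thesis unfolding Em_def by auto
    qed
  qed
  have cov: "\<exists>!e. e \<in> M \<and> v \<in> e" if vV: "v \<in> Vm W D (Suc m) A" for v
  proof -
    obtain w i where x: "v = (w,i)" by fastforce
    have wi: "w \<in> W" "1 \<le> i" "i \<le> Suc m" "(w,i) \<notin> D" "\<not> (i = Suc m \<and> w \<in> A)" using vV x by auto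
    consider (a) "i = Suc m" "w \<in> S" | (b) "i = Suc m" "w \<notin> S" | (c) "i = m" "w \<in> S"
      | (d) "i \<le> m" "\<not> (i = m \<and> w \<in> S)" using wi by linarith
    then show ?thesis
    proof cases
      case a
      show ?thesis
      proof (rule ex1I[where a="{(w,m),(w,Suc m)}"])
        show "{(w,m),(w,Suc m)} \<in> M \<and> v \<in> {(w,m),(w,Suc m)}" using a M x vert_def by auto
      next
        fix e assume e: "e \<in> M \<and> v \<in> e"
        then consider (t) "e \<in> lift N" | (v) "e \<in> vert S" | (l) "e \<in> L" using M by blast
        then show "e = {(w,m),(w,Suc m)}"
        proof cases
          case t then show ?thesis using F1[OF t, of v] e x a by auto
        next
          case v then show ?thesis using F4[OF v] e x a by auto
        next
          case l then show ?thesis using F3[OF l, of v] e x a by auto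
        qed
      qed
    next
      case b
      then have "w \<in> {u\<in>W. (u, Suc m) \<notin> D} - A - S" using wi by auto
      then obtain e0 where e0: "e0 \<in> N" "w \<in> e0" and e0u: "\<And>e'. e' \<in> N \<and> w \<in> e' \<Longrightarrow> e' = e0"
        using Nc by blast
      show ?thesis
      proof (rule ex1I[where a="(\<lambda>u. (u, Suc m)) ` e0"])
        show "(\<lambda>u. (u, Suc m)) ` e0 \<in> M \<and> v \<in> (\<lambda>u. (u, Suc m)) ` e0"
          using e0 M x b unfolding lift_def by auto
      next
        fix e assume e: "e \<in> M \<and> v \<in> e"
        then consider (t) "e \<in> lift N" | (v) "e \<in> vert S" | (l) "e \<in> L" using M by blast
        then show "e = (\<lambda>u. (u, Suc m)) ` e0"
        proof cases
          case t
          then obtain e1 where "e1 \<in> N" "w \<in> e1" "e = (\<lambda>u. (u, Suc m)) ` e1"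
            using F2[OF t, of w] e x b by auto
          then show ?thesis using e0u by auto
        next
          case v then show ?thesis using F4[OF v] e x b by auto
        next
          case l then show ?thesis using F3[OF l, of v] e x b by auto
        qed
      qed
    next
      case c
      show ?thesis
      proof (rule ex1I[where a="{(w,m),(w,Suc m)}"])
        show "{(w,m),(w,Suc m)} \<in> M \<and> v \<in> {(w,m),(w,Suc m)}" using c M x vert_def by auto
      next
        fix e assume e: "e \<in> M \<and> v \<in> e"
        then consider (t) "e \<in> lift N" | (v) "e \<in> vert S" | (l) "e \<in> L" using M by blast
        then show "e = {(w,m),(w,Suc m)}"
        proof cases
          case t then show ?thesis using F1[OF t, of v] e x c by auto
        next
          case v then show ?thesis using F4[OF v] e x c by auto
        next
          case l then show ?thesis using F3[OF l, of v] e x c by auto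
        qed
      qed
    next
      case d
      then have "v \<in> Vm W D m S" using wi x by auto
      then obtain e0 where e0: "e0 \<in> L" "v \<in> e0" and e0u: "\<And>e'. e' \<in> L \<and> v \<in> e' \<Longrightarrow> e' = e0"
        using Lc by blast
      show ?thesis
      proof (rule ex1I[where a=e0])
        show "e0 \<in> M \<and> v \<in> e0" using e0 M by auto
      next
        fix e assume e: "e \<in> M \<and> v \<in> e"
        then consider (t) "e \<in> lift N" | (v) "e \<in> vert S" | (l) "e \<in> L" using M by blast
        then show "e = e0"
        proof cases
          case t then show ?thesis using F1[OF t, of v] e x d by auto
        next
          case v then show ?thesis using F4[OF v] e x d by auto
        next
          case l then show ?thesis using e0u e by auto
        qed
      qed
    qed
  qed
  show "M \<in> PMs (Vm W D (Suc m) A) (Em W EH D (Suc m) A)"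
    using sub cov unfolding PMs_def perfect_matching_def by auto
qed

lemma main_card:
  fixes m :: nat and A :: "'a set"
  shows "card (PMs (Vm W D (Suc m) A) (Em W EH D (Suc m) A)) =
     (\<Sum>S\<in>{S. S \<subseteq> {u\<in>W. (u, Suc m) \<notin> D} - A \<and> S \<subseteq> {u. (u,m) \<in> Vm W D m {}}}.
        card (PMs ({u\<in>W. (u, Suc m) \<notin> D} - A - S) {e\<in>EH. e \<subseteq> {u\<in>W. (u, Suc m) \<notin> D} - A - S}) * card (PMs (Vm W D m S) (Em W EH D m S)))"
proof -
  define lift where "lift \<equiv> \<lambda>N. (\<lambda>e. (\<lambda>u. (u, Suc m)) ` e) ` (N::'a set set)"
  define vert where "vert \<equiv> \<lambda>S. (\<lambda>u. {(u,m),(u,Suc m)}) ` (S::'a set)"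
  define VS where "VS \<equiv> {S. S \<subseteq> {u\<in>W. (u, Suc m) \<notin> D} - A \<and> S \<subseteq> {u. (u,m) \<in> Vm W D m {}}}"
  define PH where "PH \<equiv> \<lambda>S. PMs ({u\<in>W. (u, Suc m) \<notin> D} - A - S) {e\<in>EH. e \<subseteq> {u\<in>W. (u, Suc m) \<notin> D} - A - S}"
  define PL where "PL \<equiv> \<lambda>S. PMs (Vm W D m S) (Em W EH D m S)"
  define g where "g \<equiv> \<lambda>S. (\<lambda>(N,L). lift N \<union> vert S \<union> L)"
  have dec: "PMs (Vm W D (Suc m) A) (Em W EH D (Suc m) A) = (\<Union>S\<in>VS. g S ` (PH S \<times> PL S))"
    using main_decomp[of m A] unfolding lift_def vert_def VS_def PH_def PL_def g_def by simp
  have rec: "{u. {(u,m),(u,Suc m)} \<in> g S (N,L)} = S \<and> {e\<in>g S (N,L). \<forall>x\<in>e. snd x \<le> m} = L \<and>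
      {fst ` e | e. e \<in> g S (N,L) \<and> (\<forall>x\<in>e. snd x = Suc m)} = N"
    if S: "S \<in> VS" and N: "N \<in> PH S" and L: "L \<in> PL S" for S N L
  proof -
    have Nne: "e \<in> N \<Longrightarrow> e \<noteq> {}" for e using N EH unfolding PH_def PMs_def perfect_matching_def by blast
    have Lc: "e \<in> L \<Longrightarrow> e \<in> cart_edges W EH (path_V m) (path_E m)" for e
      using L unfolding PL_def PMs_def perfect_matching_def Em_def by blast
    have Lne: "e \<in> L \<Longrightarrow> e \<noteq> {}" and Llow: "e \<in> L \<Longrightarrow> x \<in> e \<Longrightarrow> snd x \<le> m" for e x
      using cart_edge_layers[OF Lc] by auto
    have gs: "g S (N,L) = lift N \<union> vert S \<union> L" unfolding g_def by simp
    have r1: "{u. {(u,m),(u,Suc m)} \<in> g S (N,L)} = S"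
    proof (rule set_eqI, rule iffI)
      fix u assume "u \<in> {u. {(u,m),(u,Suc m)} \<in> g S (N,L)}"
      then have "{(u,m),(u,Suc m)} \<in> lift N \<union> vert S \<union> L" using gs by simp
      then consider (t) "{(u,m),(u,Suc m)} \<in> lift N" | (v) "{(u,m),(u,Suc m)} \<in> vert S"
        | (l) "{(u,m),(u,Suc m)} \<in> L" by blast
      then show "u \<in> S"
      proof cases
        case t
        then obtain e where "{(u,m),(u,Suc m)} = (\<lambda>u. (u, Suc m)) ` e" unfolding lift_def by auto
        then have "(u,m) \<in> (\<lambda>u. (u, Suc m)) ` e" by (metis insertI1)
        then show ?thesis by auto
      next
        case v
        then obtain w where "w \<in> S" "{(u,m),(u,Suc m)} = {(w,m),(w,Suc m)}" unfolding vert_def by auto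
        then show ?thesis by (auto simp: doubleton_eq_iff)
      next
        case l then show ?thesis using Llow[OF l, of "(u,Suc m)"] by auto
      qed
    next
      fix u assume "u \<in> S" then show "u \<in> {u. {(u,m),(u,Suc m)} \<in> g S (N,L)}"
        using gs vert_def by auto
    qed
    have r2: "{e\<in>g S (N,L). \<forall>x\<in>e. snd x \<le> m} = L"
    proof -
      have "\<not> (\<forall>x\<in>e. snd x \<le> m)" if eN: "e \<in> lift N" for e
      proof -
        obtain e0 where "e0 \<in> N" "e = (\<lambda>u. (u, Suc m)) ` e0" using eN unfolding lift_def by auto
        moreover then obtain a where "a \<in> e0" using Nne by blast
        ultimately show ?thesis by auto
      qed
      moreover have "\<not> (\<forall>x\<in>e. snd x \<le> m)" if "e \<in> vert S" for e
        using that unfolding vert_def by auto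
      ultimately show ?thesis using gs Llow by blast
    qed
    have r3: "{fst ` e | e. e \<in> g S (N,L) \<and> (\<forall>x\<in>e. snd x = Suc m)} = N"
    proof (rule set_eqI, rule iffI)
      fix e0 assume "e0 \<in> {fst ` e | e. e \<in> g S (N,L) \<and> (\<forall>x\<in>e. snd x = Suc m)}"
      then obtain e where e: "e0 = fst ` e" "e \<in> lift N \<union> vert S \<union> L" "\<forall>x\<in>e. snd x = Suc m"
        using gs by auto
      then consider (t) "e \<in> lift N" | (v) "e \<in> vert S" | (l) "e \<in> L" by blast
      then show "e0 \<in> N"
      proof cases
        case t
        then obtain e1 where "e1 \<in> N" "e = (\<lambda>u. (u, Suc m)) ` e1" unfolding lift_def by auto
        then show ?thesis using e(1) by (simp add: image_image)
      next
        case v then show ?thesis using e unfolding vert_def by auto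
      next
        case l
        obtain x where "x \<in> e" using Lne[OF l] by blast
        then show ?thesis using Llow[OF l] e(3) by fastforce
      qed
    next
      fix e0 assume "e0 \<in> N"
      moreover have "(\<lambda>u. (u, Suc m)) ` e0 \<in> g S (N,L)" using gs calculation unfolding lift_def by auto
      moreover have "fst ` ((\<lambda>u. (u, Suc m)) ` e0) = e0" by (simp add: image_image)
      ultimately show "e0 \<in> {fst ` e | e. e \<in> g S (N,L) \<and> (\<forall>x\<in>e. snd x = Suc m)}"
        by (intro CollectI exI[of _ "(\<lambda>u. (u, Suc m)) ` e0"]) auto
    qed
    show ?thesis using r1 r2 r3 by blast
  qed
  have finW2: "finite (Pow W)" using finW by simp
  have finEH: "finite EH"
  proof -
    have "EH \<subseteq> Pow W" using EH by blast
    then show ?thesis using finite_subset finW2 by blast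
  qed
  have finVS: "finite VS" unfolding VS_def using finW
    by (rule rev_finite_subset[OF finite_Pow_iff[THEN iffD2]]) auto
  have finPH: "finite (PH S)" for S
  proof -
    have "PH S \<subseteq> Pow EH" unfolding PH_def PMs_def perfect_matching_def by auto
    then show ?thesis using finEH finite_subset by blast
  qed
  have finVm: "finite (Vm W D m S)" for S
  proof -
    have "Vm W D m S \<subseteq> W \<times> {..m}" by (auto simp: Vm_def)
    then show ?thesis using finW finite_subset by blast
  qed
  have finPL: "finite (PL S)" for S
  proof -
    have "Em W EH D m S \<subseteq> Pow (Vm W D m S)" by (auto simp: Em_def)
    then have "finite (Em W EH D m S)" using finVm finite_subset by (metis finite_Pow_iff)
    moreover have "PL S \<subseteq> Pow (Em W EH D m S)" unfolding PL_def PMs_def perfect_matching_def by blast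
    ultimately show ?thesis using finite_subset by (metis finite_Pow_iff)
  qed
  have inj: "inj_on (g S) (PH S \<times> PL S)" if SV: "S \<in> VS" for S
  proof (rule inj_onI)
    fix x y assume a: "x \<in> PH S \<times> PL S" "y \<in> PH S \<times> PL S" "g S x = g S y"
    obtain N L N' L' where xy: "x = (N,L)" "y = (N',L')" by fastforce
    have 1: "N \<in> PH S" "L \<in> PL S" "N' \<in> PH S" "L' \<in> PL S" using a xy by auto
    have "L = L'" using rec[OF SV 1(1,2)] rec[OF SV 1(3,4)] a(3) xy by metis
    moreover have "N = N'" using rec[OF SV 1(1,2)] rec[OF SV 1(3,4)] a(3) xy by metis
    ultimately show "x = y" using xy by simp
  qed
  have disj: "g S ` (PH S \<times> PL S) \<inter> g S' ` (PH S' \<times> PL S') = {}"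
    if SV: "S \<in> VS" "S' \<in> VS" "S \<noteq> S'" for S S'
  proof (rule ccontr)
    assume "g S ` (PH S \<times> PL S) \<inter> g S' ` (PH S' \<times> PL S') \<noteq> {}"
    then obtain N L N' L' where 1: "N \<in> PH S" "L \<in> PL S" "N' \<in> PH S'" "L' \<in> PL S'"
      and eq: "g S (N,L) = g S' (N',L')" by blast
    have "S = S'" using rec[OF SV(1) 1(1,2)] rec[OF SV(2) 1(3,4)] eq by metis
    then show False using SV(3) by simp
  qed
  have "card (\<Union>S\<in>VS. g S ` (PH S \<times> PL S)) = (\<Sum>S\<in>VS. card (g S ` (PH S \<times> PL S)))"
    by (rule card_UN_disjoint[OF finVS]) (use finPH finPL disj in auto)
  also have "\<dots> = (\<Sum>S\<in>VS. card (PH S) * card (PL S))"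
    by (rule sum.cong[OF refl]) (simp add: card_image[OF inj] card_cartesian_product)
  finally show ?thesis using dec unfolding VS_def PH_def PL_def by simp
qed

definition FF where "FF m A = card (PMs (Vm W D m A) (Em W EH D m A))"
definition pm where "pm X = card (PMs X {e\<in>EH. e \<subseteq> X})"
definition Lay where "Lay m = {u. (u,m) \<in> Vm W D m {}}"
definition GG where "GG m S = (if S \<subseteq> Lay m then FF m S else 0)"

lemma Lay_Suc: "Lay (Suc m) = {u\<in>W. (u, Suc m) \<notin> D}"
  by (auto simp: Lay_def)

lemma rec_pow: "FF (Suc m) A = (\<Sum>Y\<in>Pow (Lay (Suc m) - A). pm Y * GG m (Lay (Suc m) - A - Y))"
proof -
  define B where "B = Lay (Suc m) - A"
  have finB: "finite B" unfolding B_def Lay_Suc using finW by auto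
  have "FF (Suc m) A = (\<Sum>S\<in>{S. S \<subseteq> B \<and> S \<subseteq> Lay m}. pm (B - S) * FF m S)"
    unfolding FF_def pm_def B_def Lay_Suc using main_card[of m A] unfolding Lay_def by simp
  also have "\<dots> = (\<Sum>S\<in>Pow B. pm (B - S) * GG m S)"
    by (rule sum.mono_neutral_cong_left) (use finB in \<open>auto simp: GG_def\<close>)
  also have "\<dots> = (\<Sum>Y\<in>Pow B. pm Y * GG m (B - Y))"
    by (rule sum.reindex_bij_witness[where i="\<lambda>S. B - S" and j="\<lambda>S. B - S"])
      (auto simp: double_diff)
  finally show ?thesis unfolding B_def .
qed

lemma rec_good:
  assumes G: "\<And>Y. Y \<subseteq> W \<Longrightarrow> pm Y = (if Y \<in> Good then 1 else 0)"
  shows "FF (Suc m) A = (\<Sum>Y\<in>{Y\<in>Good. Y \<subseteq> Lay (Suc m) - A}. GG m (Lay (Suc m) - A - Y))"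
proof -
  define B where "B = Lay (Suc m) - A"
  have finB: "finite B" unfolding B_def Lay_Suc using finW by auto
  have BW: "B \<subseteq> W" unfolding B_def Lay_Suc by auto
  have "FF (Suc m) A = (\<Sum>Y\<in>Pow B. pm Y * GG m (B - Y))" unfolding B_def by (rule rec_pow)
  also have "\<dots> = (\<Sum>Y\<in>Pow B. if Y \<in> Good then GG m (B - Y) else 0)"
    by (rule sum.cong[OF refl]) (use BW G in auto)
  also have "\<dots> = (\<Sum>Y\<in>{Y\<in>Pow B. Y \<in> Good}. GG m (B - Y))"
    by (rule sum.inter_filter[symmetric]) (use finB in auto)
  also have "{Y\<in>Pow B. Y \<in> Good} = {Y\<in>Good. Y \<subseteq> B}" by auto
  finally show ?thesis unfolding B_def .
qed

lemma Em0: "Em W EH D 0 A = {}"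
  unfolding Em_def using cart_edge_layers by fastforce

lemma FF0: "FF 0 A = 1"
proof -
  have "PMs (Vm W D 0 A) (Em W EH D 0 A) = {{}}"
    unfolding PMs_def perfect_matching_def Em0 by (auto simp: Vm_def)
  then show ?thesis unfolding FF_def by simp
qed

lemma GG0: "GG 0 S = (if S = {} then 1 else 0)"
  unfolding GG_def Lay_def using FF0 by auto

lemma GG_FF: "A \<subseteq> Lay m \<Longrightarrow> GG m A = FF m A"
  unfolding GG_def by simp

end

lemma PMs_cover: "M \<in> PMs V E \<Longrightarrow> v \<in> V \<Longrightarrow> \<exists>e\<in>M. v \<in> e \<and> e \<in> E"
  unfolding PMs_def perfect_matching_def by blast

lemma PMs_uniq: "M \<in> PMs V E \<Longrightarrow> v \<in> V \<Longrightarrow> e \<in> M \<Longrightarrow> e' \<in> M \<Longrightarrow> v \<in> e \<Longrightarrow> v \<in> e' \<Longrightarrow> e = e'"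
  unfolding PMs_def perfect_matching_def by blast

lemma PMs_emp: "E = {} \<Longrightarrow> PMs {} E = {{}}"
  unfolding PMs_def perfect_matching_def by auto

lemma PMs_single: "e \<noteq> {} \<Longrightarrow> E = {e} \<Longrightarrow> PMs e E = {{e}}"
  unfolding PMs_def perfect_matching_def by (auto simp: subset_singleton_iff)

lemma filt_single: "(\<And>e. e \<in> E \<Longrightarrow> e \<subseteq> Y \<Longrightarrow> e = Y) \<Longrightarrow> Y \<in> E \<Longrightarrow> {e\<in>E. e \<subseteq> Y} = {Y}"
  by auto

lemma star_E_iff: "e \<in> star_E \<longleftrightarrow> (\<exists>i\<in>{1,2,3}. e = {0::nat,i})"
  unfolding star_E_def by auto

lemma tri_E_iff: "e \<in> tri_E \<longleftrightarrow> e = {0::nat,1} \<or> e = {1,2} \<or> e = {0,2}"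
  unfolding tri_E_def by auto

lemma star_pm:
  assumes "Y \<subseteq> star_V"
  shows "card (PMs Y {e\<in>star_E. e \<subseteq> Y}) = (if Y \<in> {{},{0,1},{0,2},{0,3}} then 1 else 0)"
proof (cases "Y \<in> {{},{0,1},{0,2},{0,3}}")
  case True
  then consider "Y = {}" | (i) i where "i \<in> {1,2,3::nat}" "Y = {0,i}" by auto
  then show ?thesis
  proof cases
    case 1
    have E: "{e\<in>star_E. e \<subseteq> Y} = {}" using 1 star_E_iff by auto
    show ?thesis by (subst E) (simp add: 1 PMs_emp)
  next
    case i
    have "{e\<in>star_E. e \<subseteq> Y} = {Y}"
    proof (rule set_eqI, rule iffI)
      fix e assume "e \<in> {e\<in>star_E. e \<subseteq> Y}"
      then obtain j where "j \<in> {1,2,3::nat}" "e = {0,j}" "e \<subseteq> Y" using star_E_iff by auto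
      then show "e \<in> {Y}" using i by auto
    next
      fix e assume "e \<in> {Y}" then show "e \<in> {e\<in>star_E. e \<subseteq> Y}" using i star_E_iff by auto
    qed
    then show ?thesis using i PMs_single[of Y] True by simp
  qed
next
  case False
  have "PMs Y {e\<in>star_E. e \<subseteq> Y} = {}"
  proof (rule ccontr)
    assume "PMs Y {e\<in>star_E. e \<subseteq> Y} \<noteq> {}"
    then obtain M where M: "M \<in> PMs Y {e\<in>star_E. e \<subseteq> Y}" by blast
    have "Y \<noteq> {}" using False by auto
    then obtain v where "v \<in> Y" by blast
    then obtain e where e: "e \<in> M" "e \<in> star_E" "e \<subseteq> Y" using PMs_cover[OF M] by blast
    then obtain j where j: "j \<in> {1,2,3::nat}" "e = {0,j}" using star_E_iff by auto
    have "Y \<noteq> {0,j}" using False j by auto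
    then obtain w where w: "w \<in> Y" "w \<notin> {0,j}" using e j by blast
    then obtain e' where e': "e' \<in> M" "w \<in> e'" "e' \<in> star_E" using PMs_cover[OF M] by blast
    then obtain k where k: "k \<in> {1,2,3::nat}" "e' = {0,k}" using star_E_iff by auto
    have "k = w" using w e' k by auto
    have "0 \<in> Y" using e j by auto
    then have "e = e'" using PMs_uniq[OF M, of 0 e e'] e e' j k by auto
    then show False using w j k \<open>k = w\<close> by (auto simp: doubleton_eq_iff)
  qed
  then show ?thesis using False by simp
qed

lemma tri_pm1:
  assumes "Y \<in> {{},{0,1},{1,2},{0,2::nat}}"
  shows "card (PMs Y {e\<in>tri_E. e \<subseteq> Y}) = 1"
proof -
  consider "Y = {}" | "Y = {0,1}" | "Y = {1,2}" | "Y = {0,2}" using assms by blast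
  then show ?thesis
  proof cases
    case 1
    have E: "{e\<in>tri_E. e \<subseteq> Y} = {}" using 1 tri_E_iff by auto
    have "PMs Y {e\<in>tri_E. e \<subseteq> Y} = PMs {} {}" by (subst E) (simp only: 1)
    then have "PMs Y {e\<in>tri_E. e \<subseteq> Y} = {{}}" using PMs_emp[of "{}"] by simp
    then show ?thesis by simp
  next
    case 2
    have E: "{e\<in>tri_E. e \<subseteq> Y} = {Y}"
      unfolding 2 by (rule filt_single; unfold tri_E_iff; (elim disjE)?; simp)
    have "PMs Y {e\<in>tri_E. e \<subseteq> Y} = PMs Y {Y}" by (simp only: E)
    then have "PMs Y {e\<in>tri_E. e \<subseteq> Y} = {{Y}}" using PMs_single[of Y "{Y}"] 2 by simp
    then show ?thesis by simp
  next
    case 3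
    have E: "{e\<in>tri_E. e \<subseteq> Y} = {Y}"
      unfolding 3 by (rule filt_single; unfold tri_E_iff; (elim disjE)?; simp)
    have "PMs Y {e\<in>tri_E. e \<subseteq> Y} = PMs Y {Y}" by (simp only: E)
    then have "PMs Y {e\<in>tri_E. e \<subseteq> Y} = {{Y}}" using PMs_single[of Y "{Y}"] 3 by simp
    then show ?thesis by simp
  next
    case 4
    have E: "{e\<in>tri_E. e \<subseteq> Y} = {Y}"
      unfolding 4 by (rule filt_single; unfold tri_E_iff; (elim disjE)?; simp)
    have "PMs Y {e\<in>tri_E. e \<subseteq> Y} = PMs Y {Y}" by (simp only: E)
    then have "PMs Y {e\<in>tri_E. e \<subseteq> Y} = {{Y}}" using PMs_single[of Y "{Y}"] 4 by simp
    then show ?thesis by simp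
  qed
qed

lemma tri_pm:
  assumes "Y \<subseteq> tri_V"
  shows "card (PMs Y {e\<in>tri_E. e \<subseteq> Y}) = (if Y \<in> {{},{0,1},{1,2},{0,2}} then 1 else 0)"
proof (cases "Y \<in> {{},{0,1},{1,2},{0,2}}")
  case True
  then show ?thesis using tri_pm1 by simp
next
  case False
  have "PMs Y {e\<in>tri_E. e \<subseteq> Y} = {}"
  proof (rule ccontr)
    assume "PMs Y {e\<in>tri_E. e \<subseteq> Y} \<noteq> {}"
    then obtain M where M: "M \<in> PMs Y {e\<in>tri_E. e \<subseteq> Y}" by blast
    have "Y \<noteq> {}" using False by auto
    then obtain v where "v \<in> Y" by blast
    then obtain e where e: "e \<in> M" "e \<in> tri_E" "e \<subseteq> Y" using PMs_cover[OF M] by blast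
    have "Y \<noteq> e" using False e(2) unfolding tri_E_iff by auto
    then obtain w where w: "w \<in> Y" "w \<notin> e" using e by blast
    then obtain e' where e': "e' \<in> M" "w \<in> e'" "e' \<in> tri_E" "e' \<subseteq> Y" using PMs_cover[OF M] by blast
    have "e \<inter> e' \<noteq> {}" using e(2) e'(3) w(2) e'(2) unfolding tri_E_iff by auto
    then obtain x where "x \<in> e" "x \<in> e'" by blast
    then have "e = e'" using PMs_uniq[OF M, of x e e'] e e' by auto
    then show False using w e' by auto
  qed
  then show ?thesis using False by simp
qed


lemma conn:
  assumes "lay W EH"
  shows "num_tilings (cart_verts W (path_V m) - D') (del_edges (cart_edges W EH (path_V m) (path_E m)) D')
   = lay.FF W EH D' m {}"
proof -
  have V: "Vm W D' m {} = cart_verts W (path_V m) - D'"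
    by (auto simp: Vm_def cart_verts_def path_V_def)
  have sub: "e \<subseteq> cart_verts W (path_V m)" if "e \<in> cart_edges W EH (path_V m) (path_E m)" for e
  proof -
    from that[unfolded cart_edges_iff] show ?thesis
    proof (elim disjE exE conjE)
      fix u v i assume "e = {(u,i),(v,i)}" "{u,v} \<in> EH" "1 \<le> i" "i \<le> m"
      moreover obtain a b where "{u,v} = {a,b}" "a \<in> W" "b \<in> W" using lay.EH[OF assms] calculation(2) by blast
      ultimately show ?thesis by (auto simp: cart_verts_def path_V_def doubleton_eq_iff)
    next
      fix u i assume "e = {(u,i),(u,Suc i)}" "u \<in> W" "1 \<le> i" "Suc i \<le> m"
      then show ?thesis by (auto simp: cart_verts_def path_V_def)
    qed
  qed
  have E: "Em W EH D' m {} = del_edges (cart_edges W EH (path_V m) (path_E m)) D'"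
    unfolding Em_def del_edges_def V using sub by blast
  show ?thesis unfolding num_tilings_def lay.FF_def[OF assms] V[symmetric] E[symmetric] PMs_def ..
qed

lemma lay_star: "lay star_V star_E"
proof
  show "finite star_V" by (simp add: star_V_def)
next
  fix e assume "e \<in> star_E"
  then obtain i where i: "i \<in> {1,2,3::nat}" "e = {0,i}" unfolding star_E_iff by blast
  have "i \<noteq> 0" "i \<in> star_V" "0 \<in> star_V" using i(1) by (auto simp: star_V_def)
  then show "\<exists>u v. e = {u,v} \<and> u \<noteq> v \<and> u \<in> star_V \<and> v \<in> star_V"
    using i(2) by blast
qed

lemma lay_tri: "lay tri_V tri_E"
proof
  show "finite tri_V" by (simp add: tri_V_def)
next
  fix e assume "e \<in> tri_E"
  then consider "e = {0,1}" | "e = {1,2}" | "e = {0,2}" using tri_E_iff by blast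
  then show "\<exists>u v. e = {u,v} \<and> u \<noteq> v \<and> u \<in> tri_V \<and> v \<in> tri_V"
  proof cases
    case 1 then show ?thesis by (intro exI[of _ 0] exI[of _ 1]) (simp add: tri_V_def)
  next
    case 2 then show ?thesis by (intro exI[of _ 1] exI[of _ 2]) (simp add: tri_V_def)
  next
    case 3 then show ?thesis by (intro exI[of _ 0] exI[of _ 2]) (simp add: tri_V_def)
  qed
qed

lemma filter_insert: "{Y\<in>insert a G. P Y} = (if P a then insert a {Y\<in>G. P Y} else {Y\<in>G. P Y})"
  by auto

lemma filter_empty: "{Y\<in>{}. P Y} = {}"
  by auto

lemma star_rec:
  assumes nD: "\<And>u. (u, Suc m) \<notin> D"
  shows "lay.FF star_V star_E D (Suc m) A =
    (\<Sum>Y\<in>{Y\<in>{{},{0,1},{0,2},{0,3}}. Y \<subseteq> {0,1,2,3} - A}. lay.GG star_V star_E D m ({0,1,2,3} - A - Y))"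
proof -
  have L: "lay.Lay star_V D (Suc m) = star_V" using lay.Lay_Suc[OF lay_star] nD by auto
  have G: "\<And>Y. Y \<subseteq> star_V \<Longrightarrow> lay.pm star_E Y = (if Y \<in> {{},{0,1},{0,2},{0,3}} then 1 else 0)"
    unfolding lay.pm_def[OF lay_star] by (rule star_pm)
  show ?thesis
    using lay.rec_good[OF lay_star G, of D m A] unfolding L by (simp only: star_V_def)
qed

lemma tri_rec:
  assumes nD: "\<And>u. (u, Suc m) \<notin> D"
  shows "lay.FF tri_V tri_E D (Suc m) A =
    (\<Sum>Y\<in>{Y\<in>{{},{0,1},{1,2},{0,2}}. Y \<subseteq> {0,1,2} - A}. lay.GG tri_V tri_E D m ({0,1,2} - A - Y))"
proof -
  have L: "lay.Lay tri_V D (Suc m) = tri_V" using lay.Lay_Suc[OF lay_tri] nD by auto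
  have G: "\<And>Y. Y \<subseteq> tri_V \<Longrightarrow> lay.pm tri_E Y = (if Y \<in> {{},{0,1},{1,2},{0,2}} then 1 else 0)"
    unfolding lay.pm_def[OF lay_tri] by (rule tri_pm)
  show ?thesis
    using lay.rec_good[OF lay_tri G, of D m A] unfolding L by (simp only: tri_V_def)
qed

lemma star_S0:
  assumes nD: "\<And>u. (u, Suc m) \<notin> D"
  shows "lay.FF star_V star_E D (Suc m) {} = lay.GG star_V star_E D m {0,1,2,3} + lay.GG star_V star_E D m {2,3}
     + lay.GG star_V star_E D m {1,3} + lay.GG star_V star_E D m {1,2}"
  apply (subst star_rec[OF nD])
  apply (simp only: filter_insert filter_empty)
  apply (simp add: doubleton_eq_iff insert_Diff_if)
  done


lemma star_SW:
  assumes nD: "\<And>u. (u, Suc m) \<notin> D"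
  shows "lay.FF star_V star_E D (Suc m) {0,1,2,3} = lay.GG star_V star_E D m {}"
  apply (subst star_rec[OF nD])
  apply (simp only: filter_insert filter_empty)
  apply (simp add: doubleton_eq_iff insert_Diff_if)
  done

lemma star_S23:
  assumes nD: "\<And>u. (u, Suc m) \<notin> D"
  shows "lay.FF star_V star_E D (Suc m) {2,3} = lay.GG star_V star_E D m {0,1} + lay.GG star_V star_E D m {}"
  apply (subst star_rec[OF nD])
  apply (simp only: filter_insert filter_empty)
  apply (simp add: doubleton_eq_iff insert_Diff_if)
  done

lemma star_S13:
  assumes nD: "\<And>u. (u, Suc m) \<notin> D"
  shows "lay.FF star_V star_E D (Suc m) {1,3} = lay.GG star_V star_E D m {0,2} + lay.GG star_V star_E D m {}"
  apply (subst star_rec[OF nD])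
  apply (simp only: filter_insert filter_empty)
  apply (simp add: doubleton_eq_iff insert_Diff_if)
  done

lemma star_S12:
  assumes nD: "\<And>u. (u, Suc m) \<notin> D"
  shows "lay.FF star_V star_E D (Suc m) {1,2} = lay.GG star_V star_E D m {0,3} + lay.GG star_V star_E D m {}"
  apply (subst star_rec[OF nD])
  apply (simp only: filter_insert filter_empty)
  apply (simp add: doubleton_eq_iff insert_Diff_if)
  done

lemma star_S01:
  assumes nD: "\<And>u. (u, Suc m) \<notin> D"
  shows "lay.FF star_V star_E D (Suc m) {0,1} = lay.GG star_V star_E D m {2,3}"
  apply (subst star_rec[OF nD])
  apply (simp only: filter_insert filter_empty)
  apply (simp add: doubleton_eq_iff insert_Diff_if)
  done

lemma star_S02:
  assumes nD: "\<And>u. (u, Suc m) \<notin> D"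
  shows "lay.FF star_V star_E D (Suc m) {0,2} = lay.GG star_V star_E D m {1,3}"
  apply (subst star_rec[OF nD])
  apply (simp only: filter_insert filter_empty)
  apply (simp add: doubleton_eq_iff insert_Diff_if)
  done

lemma star_S03:
  assumes nD: "\<And>u. (u, Suc m) \<notin> D"
  shows "lay.FF star_V star_E D (Suc m) {0,3} = lay.GG star_V star_E D m {1,2}"
  apply (subst star_rec[OF nD])
  apply (simp only: filter_insert filter_empty)
  apply (simp add: doubleton_eq_iff insert_Diff_if)
  done

lemma tri_S0:
  assumes nD: "\<And>u. (u, Suc m) \<notin> D"
  shows "lay.FF tri_V tri_E D (Suc m) {} = lay.GG tri_V tri_E D m {0,1,2} + lay.GG tri_V tri_E D m {2} + lay.GG tri_V tri_E D m {0} + lay.GG tri_V tri_E D m {1}"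
  apply (subst tri_rec[OF nD])
  apply (simp only: filter_insert filter_empty)
  apply (simp add: doubleton_eq_iff insert_Diff_if)
  done

lemma tri_SW:
  assumes nD: "\<And>u. (u, Suc m) \<notin> D"
  shows "lay.FF tri_V tri_E D (Suc m) {0,1,2} = lay.GG tri_V tri_E D m {}"
  apply (subst tri_rec[OF nD])
  apply (simp only: filter_insert filter_empty)
  apply (simp add: doubleton_eq_iff insert_Diff_if)
  done

lemma tri_S2:
  assumes nD: "\<And>u. (u, Suc m) \<notin> D"
  shows "lay.FF tri_V tri_E D (Suc m) {2} = lay.GG tri_V tri_E D m {0,1} + lay.GG tri_V tri_E D m {}"
  apply (subst tri_rec[OF nD])
  apply (simp only: filter_insert filter_empty)
  apply (simp add: doubleton_eq_iff insert_Diff_if)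
  done

lemma tri_S0b:
  assumes nD: "\<And>u. (u, Suc m) \<notin> D"
  shows "lay.FF tri_V tri_E D (Suc m) {0} = lay.GG tri_V tri_E D m {1,2} + lay.GG tri_V tri_E D m {}"
  apply (subst tri_rec[OF nD])
  apply (simp only: filter_insert filter_empty)
  apply (simp add: doubleton_eq_iff insert_Diff_if)
  done

lemma tri_S1:
  assumes nD: "\<And>u. (u, Suc m) \<notin> D"
  shows "lay.FF tri_V tri_E D (Suc m) {1} = lay.GG tri_V tri_E D m {0,2} + lay.GG tri_V tri_E D m {}"
  apply (subst tri_rec[OF nD])
  apply (simp only: filter_insert filter_empty)
  apply (simp add: doubleton_eq_iff insert_Diff_if)
  done

lemma tri_S01:
  assumes nD: "\<And>u. (u, Suc m) \<notin> D"
  shows "lay.FF tri_V tri_E D (Suc m) {0,1} = lay.GG tri_V tri_E D m {2}"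
  apply (subst tri_rec[OF nD])
  apply (simp only: filter_insert filter_empty)
  apply (simp add: doubleton_eq_iff insert_Diff_if)
  done

lemma tri_S12:
  assumes nD: "\<And>u. (u, Suc m) \<notin> D"
  shows "lay.FF tri_V tri_E D (Suc m) {1,2} = lay.GG tri_V tri_E D m {0}"
  apply (subst tri_rec[OF nD])
  apply (simp only: filter_insert filter_empty)
  apply (simp add: doubleton_eq_iff insert_Diff_if)
  done

lemma tri_S02:
  assumes nD: "\<And>u. (u, Suc m) \<notin> D"
  shows "lay.FF tri_V tri_E D (Suc m) {0,2} = lay.GG tri_V tri_E D m {1}"
  apply (subst tri_rec[OF nD])
  apply (simp only: filter_insert filter_empty)
  apply (simp add: doubleton_eq_iff insert_Diff_if)
  done


lemma star_GF:
  assumes nD: "\<And>u. (u, Suc m) \<notin> D" and A: "A \<subseteq> {0,1,2,3}"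
  shows "lay.GG star_V star_E D (Suc m) A = lay.FF star_V star_E D (Suc m) A"
proof -
  have "lay.Lay star_V D (Suc m) = {0,1,2,3}" using lay.Lay_Suc[OF lay_star] nD by (auto simp: star_V_def)
  then show ?thesis using A unfolding lay.GG_def[OF lay_star] by simp
qed

lemma tri_GF:
  assumes nD: "\<And>u. (u, Suc m) \<notin> D" and A: "A \<subseteq> {0,1,2}"
  shows "lay.GG tri_V tri_E D (Suc m) A = lay.FF tri_V tri_E D (Suc m) A"
proof -
  have "lay.Lay tri_V D (Suc m) = {0,1,2}" using lay.Lay_Suc[OF lay_tri] nD by (auto simp: tri_V_def)
  then show ?thesis using A unfolding lay.GG_def[OF lay_tri] by simp
qed

definition xs where "xs D m = lay.GG star_V star_E D m {}"
definition ys where "ys D m = lay.GG star_V star_E D m {0,1} + lay.GG star_V star_E D m {0,2} + lay.GG star_V star_E D m {0,3}"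
definition xt where "xt D m = lay.GG tri_V tri_E D m {}"
definition yt where "yt D m = lay.GG tri_V tri_E D m {0,1} + lay.GG tri_V tri_E D m {1,2} + lay.GG tri_V tri_E D m {0,2}"

lemma star_step:
  assumes nD1: "\<And>u. (u, Suc m) \<notin> D" and nD2: "\<And>u. (u, Suc (Suc m)) \<notin> D"
  shows "xs D (Suc (Suc m)) = 4 * xs D m + ys D m \<and> ys D (Suc (Suc m)) = 3 * xs D m + ys D m"
proof -
  let ?G = "lay.GG star_V star_E D"
  have a: "xs D (Suc (Suc m)) = ?G (Suc m) {0,1,2,3} + ?G (Suc m) {2,3} + ?G (Suc m) {1,3} + ?G (Suc m) {1,2}"
    unfolding xs_def star_GF[OF nD2 empty_subsetI] by (rule star_S0[OF nD2])
  have b: "ys D (Suc (Suc m)) = ?G (Suc m) {2,3} + ?G (Suc m) {1,3} + ?G (Suc m) {1,2}"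
    unfolding ys_def using star_GF[OF nD2, of "{0,1}"] star_GF[OF nD2, of "{0,2}"] star_GF[OF nD2, of "{0,3}"]
      star_S01[OF nD2] star_S02[OF nD2] star_S03[OF nD2] by simp
  have c1: "?G (Suc m) {0,1,2,3} = ?G m {}" using star_GF[OF nD1, of "{0,1,2,3}"] star_SW[OF nD1] by simp
  have c2: "?G (Suc m) {2,3} = ?G m {0,1} + ?G m {}" using star_GF[OF nD1, of "{2,3}"] star_S23[OF nD1] by simp
  have c3: "?G (Suc m) {1,3} = ?G m {0,2} + ?G m {}" using star_GF[OF nD1, of "{1,3}"] star_S13[OF nD1] by simp
  have c4: "?G (Suc m) {1,2} = ?G m {0,3} + ?G m {}" using star_GF[OF nD1, of "{1,2}"] star_S12[OF nD1] by simp
  show ?thesis unfolding a b c1 c2 c3 c4 by (simp add: xs_def ys_def)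
qed


lemma tri_step:
  assumes nD1: "\<And>u. (u, Suc m) \<notin> D" and nD2: "\<And>u. (u, Suc (Suc m)) \<notin> D"
  shows "xt D (Suc (Suc m)) = 4 * xt D m + yt D m \<and> yt D (Suc (Suc m)) = 3 * xt D m + yt D m"
proof -
  let ?G = "lay.GG tri_V tri_E D"
  have a: "xt D (Suc (Suc m)) = ?G (Suc m) {0,1,2} + ?G (Suc m) {2} + ?G (Suc m) {0} + ?G (Suc m) {1}"
    unfolding xt_def tri_GF[OF nD2 empty_subsetI] by (rule tri_S0[OF nD2])
  have b: "yt D (Suc (Suc m)) = ?G (Suc m) {2} + ?G (Suc m) {0} + ?G (Suc m) {1}"
    unfolding yt_def using tri_GF[OF nD2, of "{0,1}"] tri_GF[OF nD2, of "{1,2}"] tri_GF[OF nD2, of "{0,2}"]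
      tri_S01[OF nD2] tri_S12[OF nD2] tri_S02[OF nD2] by simp
  have c1: "?G (Suc m) {0,1,2} = ?G m {}" using tri_GF[OF nD1, of "{0,1,2}"] tri_SW[OF nD1] by simp
  have c2: "?G (Suc m) {2} = ?G m {0,1} + ?G m {}" using tri_GF[OF nD1, of "{2}"] tri_S2[OF nD1] by simp
  have c3: "?G (Suc m) {0} = ?G m {1,2} + ?G m {}" using tri_GF[OF nD1, of "{0}"] tri_S0b[OF nD1] by simp
  have c4: "?G (Suc m) {1} = ?G m {0,2} + ?G m {}" using tri_GF[OF nD1, of "{1}"] tri_S1[OF nD1] by simp
  show ?thesis unfolding a b c1 c2 c3 c4 by (simp add: xt_def yt_def)
qed

lemma seq_eq:
  assumes base: "xs D k = xt D' k" "ys D k = yt D' k"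
    and nD: "\<And>u j. j > k \<Longrightarrow> (u, j) \<notin> D" and nD': "\<And>u j. j > k \<Longrightarrow> (u, j) \<notin> D'"
  shows "xs D (k + 2*n) = xt D' (k + 2*n) \<and> ys D (k + 2*n) = yt D' (k + 2*n)"
proof (induction n)
  case 0 then show ?case using base by simp
next
  case (Suc n)
  have e: "k + 2 * Suc n = Suc (Suc (k + 2*n))" by simp
  have s1: "xs D (Suc (Suc (k + 2*n))) = 4 * xs D (k + 2*n) + ys D (k + 2*n) \<and>
      ys D (Suc (Suc (k + 2*n))) = 3 * xs D (k + 2*n) + ys D (k + 2*n)"
    by (rule star_step) (use nD in auto)
  have s2: "xt D' (Suc (Suc (k + 2*n))) = 4 * xt D' (k + 2*n) + yt D' (k + 2*n) \<and>
      yt D' (Suc (Suc (k + 2*n))) = 3 * xt D' (k + 2*n) + yt D' (k + 2*n)"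
    by (rule tri_step) (use nD' in auto)
  show ?case unfolding e using s1 s2 Suc.IH by simp
qed

lemma star_base0: "xs {} 0 = 1" "ys {} 0 = 0"
  unfolding xs_def ys_def lay.GG0[OF lay_star] by simp_all

lemma tri_base0: "xt {} 0 = 1" "yt {} 0 = 0"
  unfolding xt_def yt_def lay.GG0[OF lay_tri] by simp_all


lemma star_base_12:
  "xs {(1,1),(2,1)} (Suc 0) = 1 \<and> ys {(1,1),(2,1)} (Suc 0) = 1"
proof -
  let ?D = "{(1::nat,1::nat),(2,1)}"
  have L: "lay.Lay star_V ?D (Suc 0) = {0,3}"
    unfolding lay.Lay_Suc[OF lay_star] unfolding star_V_def
    apply (simp only: filter_insert filter_empty)
    apply simp
    done
  have G: "\<And>Y. Y \<subseteq> star_V \<Longrightarrow> lay.pm star_E Y = (if Y \<in> {{},{0,1},{0,2},{0,3}} then 1 else 0)"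
    unfolding lay.pm_def[OF lay_star] by (rule star_pm)
  have R: "\<And>A. lay.FF star_V star_E ?D (Suc 0) A = (\<Sum>Y\<in>{Y\<in>{{},{0,1},{0,2},{0,3}}. Y \<subseteq> {0,3} - A}. lay.GG star_V star_E ?D 0 ({0,3} - A - Y))"
    using lay.rec_good[OF lay_star G, of ?D 0] unfolding L .
  have GD: "\<And>A. lay.GG star_V star_E ?D (Suc 0) A = (if A \<subseteq> {0,3} then lay.FF star_V star_E ?D (Suc 0) A else 0)"
    using lay.GG_def[OF lay_star] L by simp
  show ?thesis
    unfolding xs_def ys_def GD
    apply (simp only: R filter_insert filter_empty)
    apply (simp add: lay.GG0[OF lay_star] doubleton_eq_iff insert_Diff_if)
    done
qed

lemma star_base_13:
  "xs {(1,1),(3,1)} (Suc 0) = 1 \<and> ys {(1,1),(3,1)} (Suc 0) = 1"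
proof -
  let ?D = "{(1::nat,1::nat),(3,1)}"
  have L: "lay.Lay star_V ?D (Suc 0) = {0,2}"
    unfolding lay.Lay_Suc[OF lay_star] unfolding star_V_def
    apply (simp only: filter_insert filter_empty)
    apply simp
    done
  have G: "\<And>Y. Y \<subseteq> star_V \<Longrightarrow> lay.pm star_E Y = (if Y \<in> {{},{0,1},{0,2},{0,3}} then 1 else 0)"
    unfolding lay.pm_def[OF lay_star] by (rule star_pm)
  have R: "\<And>A. lay.FF star_V star_E ?D (Suc 0) A = (\<Sum>Y\<in>{Y\<in>{{},{0,1},{0,2},{0,3}}. Y \<subseteq> {0,2} - A}. lay.GG star_V star_E ?D 0 ({0,2} - A - Y))"
    using lay.rec_good[OF lay_star G, of ?D 0] unfolding L .
  have GD: "\<And>A. lay.GG star_V star_E ?D (Suc 0) A = (if A \<subseteq> {0,2} then lay.FF star_V star_E ?D (Suc 0) A else 0)"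
    using lay.GG_def[OF lay_star] L by simp
  show ?thesis
    unfolding xs_def ys_def GD
    apply (simp only: R filter_insert filter_empty)
    apply (simp add: lay.GG0[OF lay_star] doubleton_eq_iff insert_Diff_if)
    done
qed

lemma star_base_21:
  "xs {(2,1),(1,1)} (Suc 0) = 1 \<and> ys {(2,1),(1,1)} (Suc 0) = 1"
proof -
  let ?D = "{(2::nat,1::nat),(1,1)}"
  have L: "lay.Lay star_V ?D (Suc 0) = {0,3}"
    unfolding lay.Lay_Suc[OF lay_star] unfolding star_V_def
    apply (simp only: filter_insert filter_empty)
    apply simp
    done
  have G: "\<And>Y. Y \<subseteq> star_V \<Longrightarrow> lay.pm star_E Y = (if Y \<in> {{},{0,1},{0,2},{0,3}} then 1 else 0)"
    unfolding lay.pm_def[OF lay_star] by (rule star_pm)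
  have R: "\<And>A. lay.FF star_V star_E ?D (Suc 0) A = (\<Sum>Y\<in>{Y\<in>{{},{0,1},{0,2},{0,3}}. Y \<subseteq> {0,3} - A}. lay.GG star_V star_E ?D 0 ({0,3} - A - Y))"
    using lay.rec_good[OF lay_star G, of ?D 0] unfolding L .
  have GD: "\<And>A. lay.GG star_V star_E ?D (Suc 0) A = (if A \<subseteq> {0,3} then lay.FF star_V star_E ?D (Suc 0) A else 0)"
    using lay.GG_def[OF lay_star] L by simp
  show ?thesis
    unfolding xs_def ys_def GD
    apply (simp only: R filter_insert filter_empty)
    apply (simp add: lay.GG0[OF lay_star] doubleton_eq_iff insert_Diff_if)
    done
qed

lemma star_base_23:
  "xs {(2,1),(3,1)} (Suc 0) = 1 \<and> ys {(2,1),(3,1)} (Suc 0) = 1"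
proof -
  let ?D = "{(2::nat,1::nat),(3,1)}"
  have L: "lay.Lay star_V ?D (Suc 0) = {0,1}"
    unfolding lay.Lay_Suc[OF lay_star] unfolding star_V_def
    apply (simp only: filter_insert filter_empty)
    apply simp
    done
  have G: "\<And>Y. Y \<subseteq> star_V \<Longrightarrow> lay.pm star_E Y = (if Y \<in> {{},{0,1},{0,2},{0,3}} then 1 else 0)"
    unfolding lay.pm_def[OF lay_star] by (rule star_pm)
  have R: "\<And>A. lay.FF star_V star_E ?D (Suc 0) A = (\<Sum>Y\<in>{Y\<in>{{},{0,1},{0,2},{0,3}}. Y \<subseteq> {0,1} - A}. lay.GG star_V star_E ?D 0 ({0,1} - A - Y))"
    using lay.rec_good[OF lay_star G, of ?D 0] unfolding L .
  have GD: "\<And>A. lay.GG star_V star_E ?D (Suc 0) A = (if A \<subseteq> {0,1} then lay.FF star_V star_E ?D (Suc 0) A else 0)"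
    using lay.GG_def[OF lay_star] L by simp
  show ?thesis
    unfolding xs_def ys_def GD
    apply (simp only: R filter_insert filter_empty)
    apply (simp add: lay.GG0[OF lay_star] doubleton_eq_iff insert_Diff_if)
    done
qed

lemma star_base_31:
  "xs {(3,1),(1,1)} (Suc 0) = 1 \<and> ys {(3,1),(1,1)} (Suc 0) = 1"
proof -
  let ?D = "{(3::nat,1::nat),(1,1)}"
  have L: "lay.Lay star_V ?D (Suc 0) = {0,2}"
    unfolding lay.Lay_Suc[OF lay_star] unfolding star_V_def
    apply (simp only: filter_insert filter_empty)
    apply simp
    done
  have G: "\<And>Y. Y \<subseteq> star_V \<Longrightarrow> lay.pm star_E Y = (if Y \<in> {{},{0,1},{0,2},{0,3}} then 1 else 0)"
    unfolding lay.pm_def[OF lay_star] by (rule star_pm)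
  have R: "\<And>A. lay.FF star_V star_E ?D (Suc 0) A = (\<Sum>Y\<in>{Y\<in>{{},{0,1},{0,2},{0,3}}. Y \<subseteq> {0,2} - A}. lay.GG star_V star_E ?D 0 ({0,2} - A - Y))"
    using lay.rec_good[OF lay_star G, of ?D 0] unfolding L .
  have GD: "\<And>A. lay.GG star_V star_E ?D (Suc 0) A = (if A \<subseteq> {0,2} then lay.FF star_V star_E ?D (Suc 0) A else 0)"
    using lay.GG_def[OF lay_star] L by simp
  show ?thesis
    unfolding xs_def ys_def GD
    apply (simp only: R filter_insert filter_empty)
    apply (simp add: lay.GG0[OF lay_star] doubleton_eq_iff insert_Diff_if)
    done
qed

lemma star_base_32:
  "xs {(3,1),(2,1)} (Suc 0) = 1 \<and> ys {(3,1),(2,1)} (Suc 0) = 1"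
proof -
  let ?D = "{(3::nat,1::nat),(2,1)}"
  have L: "lay.Lay star_V ?D (Suc 0) = {0,1}"
    unfolding lay.Lay_Suc[OF lay_star] unfolding star_V_def
    apply (simp only: filter_insert filter_empty)
    apply simp
    done
  have G: "\<And>Y. Y \<subseteq> star_V \<Longrightarrow> lay.pm star_E Y = (if Y \<in> {{},{0,1},{0,2},{0,3}} then 1 else 0)"
    unfolding lay.pm_def[OF lay_star] by (rule star_pm)
  have R: "\<And>A. lay.FF star_V star_E ?D (Suc 0) A = (\<Sum>Y\<in>{Y\<in>{{},{0,1},{0,2},{0,3}}. Y \<subseteq> {0,1} - A}. lay.GG star_V star_E ?D 0 ({0,1} - A - Y))"
    using lay.rec_good[OF lay_star G, of ?D 0] unfolding L .
  have GD: "\<And>A. lay.GG star_V star_E ?D (Suc 0) A = (if A \<subseteq> {0,1} then lay.FF star_V star_E ?D (Suc 0) A else 0)"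
    using lay.GG_def[OF lay_star] L by simp
  show ?thesis
    unfolding xs_def ys_def GD
    apply (simp only: R filter_insert filter_empty)
    apply (simp add: lay.GG0[OF lay_star] doubleton_eq_iff insert_Diff_if)
    done
qed

lemma tri_base_0:
  "xt {(0,1)} (Suc 0) = 1 \<and> yt {(0,1)} (Suc 0) = 1"
proof -
  let ?D = "{(0::nat,1::nat)}"
  have L: "lay.Lay tri_V ?D (Suc 0) = {1,2}"
    unfolding lay.Lay_Suc[OF lay_tri] unfolding tri_V_def
    apply (simp only: filter_insert filter_empty)
    apply simp
    done
  have G: "\<And>Y. Y \<subseteq> tri_V \<Longrightarrow> lay.pm tri_E Y = (if Y \<in> {{},{0,1},{1,2},{0,2}} then 1 else 0)"
    unfolding lay.pm_def[OF lay_tri] by (rule tri_pm)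
  have R: "\<And>A. lay.FF tri_V tri_E ?D (Suc 0) A = (\<Sum>Y\<in>{Y\<in>{{},{0,1},{1,2},{0,2}}. Y \<subseteq> {1,2} - A}. lay.GG tri_V tri_E ?D 0 ({1,2} - A - Y))"
    using lay.rec_good[OF lay_tri G, of ?D 0] unfolding L .
  have GD: "\<And>A. lay.GG tri_V tri_E ?D (Suc 0) A = (if A \<subseteq> {1,2} then lay.FF tri_V tri_E ?D (Suc 0) A else 0)"
    using lay.GG_def[OF lay_tri] L by simp
  show ?thesis
    unfolding xt_def yt_def GD
    apply (simp only: R filter_insert filter_empty)
    apply (simp add: lay.GG0[OF lay_tri] doubleton_eq_iff insert_Diff_if)
    done
qed

lemma tri_base_1:
  "xt {(1,1)} (Suc 0) = 1 \<and> yt {(1,1)} (Suc 0) = 1"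
proof -
  let ?D = "{(1::nat,1::nat)}"
  have L: "lay.Lay tri_V ?D (Suc 0) = {0,2}"
    unfolding lay.Lay_Suc[OF lay_tri] unfolding tri_V_def
    apply (simp only: filter_insert filter_empty)
    apply simp
    done
  have G: "\<And>Y. Y \<subseteq> tri_V \<Longrightarrow> lay.pm tri_E Y = (if Y \<in> {{},{0,1},{1,2},{0,2}} then 1 else 0)"
    unfolding lay.pm_def[OF lay_tri] by (rule tri_pm)
  have R: "\<And>A. lay.FF tri_V tri_E ?D (Suc 0) A = (\<Sum>Y\<in>{Y\<in>{{},{0,1},{1,2},{0,2}}. Y \<subseteq> {0,2} - A}. lay.GG tri_V tri_E ?D 0 ({0,2} - A - Y))"
    using lay.rec_good[OF lay_tri G, of ?D 0] unfolding L .
  have GD: "\<And>A. lay.GG tri_V tri_E ?D (Suc 0) A = (if A \<subseteq> {0,2} then lay.FF tri_V tri_E ?D (Suc 0) A else 0)"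
    using lay.GG_def[OF lay_tri] L by simp
  show ?thesis
    unfolding xt_def yt_def GD
    apply (simp only: R filter_insert filter_empty)
    apply (simp add: lay.GG0[OF lay_tri] doubleton_eq_iff insert_Diff_if)
    done
qed

lemma tri_base_2:
  "xt {(2,1)} (Suc 0) = 1 \<and> yt {(2,1)} (Suc 0) = 1"
proof -
  let ?D = "{(2::nat,1::nat)}"
  have L: "lay.Lay tri_V ?D (Suc 0) = {0,1}"
    unfolding lay.Lay_Suc[OF lay_tri] unfolding tri_V_def
    apply (simp only: filter_insert filter_empty)
    apply simp
    done
  have G: "\<And>Y. Y \<subseteq> tri_V \<Longrightarrow> lay.pm tri_E Y = (if Y \<in> {{},{0,1},{1,2},{0,2}} then 1 else 0)"
    unfolding lay.pm_def[OF lay_tri] by (rule tri_pm)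
  have R: "\<And>A. lay.FF tri_V tri_E ?D (Suc 0) A = (\<Sum>Y\<in>{Y\<in>{{},{0,1},{1,2},{0,2}}. Y \<subseteq> {0,1} - A}. lay.GG tri_V tri_E ?D 0 ({0,1} - A - Y))"
    using lay.rec_good[OF lay_tri G, of ?D 0] unfolding L .
  have GD: "\<And>A. lay.GG tri_V tri_E ?D (Suc 0) A = (if A \<subseteq> {0,1} then lay.FF tri_V tri_E ?D (Suc 0) A else 0)"
    using lay.GG_def[OF lay_tri] L by simp
  show ?thesis
    unfolding xt_def yt_def GD
    apply (simp only: R filter_insert filter_empty)
    apply (simp add: lay.GG0[OF lay_tri] doubleton_eq_iff insert_Diff_if)
    done
qed


lemma del_edges_empty: "del_edges E {} = E" by (simp add: del_edges_def)

lemma star_base: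
  assumes "a \<in> {1,2,3}" "b \<in> {1,2,3}" "a \<noteq> b"
  shows "xs {(a,1),(b,1)} (Suc 0) = 1 \<and> ys {(a,1),(b,1)} (Suc 0) = 1"
proof -
  have "(a,b) \<in> {(1,2),(1,3),(2,1),(2,3),(3,1),(3,2)}" using assms by auto
  then show ?thesis
    apply (elim insertE emptyE)
    using star_base_12 star_base_13 star_base_21 star_base_23 star_base_31 star_base_32
    by simp_all
qed

lemma tri_base:
  assumes "v \<in> tri_V"
  shows "xt {(v,1)} (Suc 0) = 1 \<and> yt {(v,1)} (Suc 0) = 1"
proof -
  have "v \<in> {0,1,2}" using assms by (simp add: tri_V_def)
  then show ?thesis
    apply (elim insertE emptyE)
    using tri_base_0 tri_base_1 tri_base_2
    by simp_all
qed

lemma Q_xs: "Q n = xs {} (0 + 2*n)"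
  using conn[OF lay_star, of "2*n" "{}"]
  unfolding Q_def xs_def lay.GG_def[OF lay_star] by (simp add: del_edges_empty)

lemma T_xt: "T n = xt {} (0 + 2*n)"
  using conn[OF lay_tri, of "2*n" "{}"]
  unfolding T_def xt_def lay.GG_def[OF lay_tri] by (simp add: del_edges_empty)

lemma q_xs: "q a b n = xs {(a,1),(b,1)} (Suc 0 + 2*n)"
proof -
  have e: "2*n+1 = Suc 0 + 2*n" by simp
  show ?thesis
    using conn[OF lay_star, of "2*n+1" "{(a,1),(b,1)}"]
    unfolding q_def Let_def xs_def lay.GG_def[OF lay_star] e by simp
qed

lemma t_xt: "t v n = xt {(v,1)} (Suc 0 + 2*n)"
proof -
  have e: "2*n+1 = Suc 0 + 2*n" by simp
  show ?thesis
    using conn[OF lay_tri, of "2*n+1" "{(v,1)}"]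
    unfolding t_def Let_def xt_def lay.GG_def[OF lay_tri] e by simp
qed

theorem theorem9:
  shows "(\<forall>n\<ge>1. Q n = T n) \<and>
         (\<forall>a\<in>{1,2,3}. \<forall>b\<in>{1,2,3}. \<forall>v\<in>tri_V. a \<noteq> b \<longrightarrow> (\<forall>n. q a b n = t v n))"
proof (intro conjI allI impI ballI)
  fix n :: nat
  have "xs {} (0 + 2*n) = xt {} (0 + 2*n) \<and> ys {} (0 + 2*n) = yt {} (0 + 2*n)"
    by (rule seq_eq) (simp_all add: star_base0 tri_base0)
  then show "Q n = T n" unfolding Q_xs T_xt by simp
next
  fix a b v n :: nat
  assume ab: "a \<in> {1,2,3}" "b \<in> {1,2,3}" and v: "v \<in> tri_V" and ne: "a \<noteq> b"
  have "xs {(a,1),(b,1)} (Suc 0 + 2*n) = xt {(v,1)} (Suc 0 + 2*n) \<and>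
        ys {(a,1),(b,1)} (Suc 0 + 2*n) = yt {(v,1)} (Suc 0 + 2*n)"
    by (rule seq_eq) (use star_base[OF ab ne] tri_base[OF v] in auto)
  then show "q a b n = t v n" unfolding q_xs t_xt by simp
qed

end
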